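(* Let $V$ be a simple Yetter-Drinfeld module over $H=B(n,w,\gamma)$ with $\dim_\Bbbk V=p+1$ for some $p\ge0$, and let $v\in V$ be a standard element of type $(\alpha,\beta,x^rg^i)$ with $\alpha,\beta\in\Bbbk^*$, $r,i\in\mathbb{Z}$. If $u$ is any standard element of $V$, then $u=\lambda v$ for some $\lambda\in\Bbbk^*$.
   Context: $\Bbbk$ is an algebraically closed field of characteristic $0$; $n,w$ positive integers, $\gamma$ a primitive $n$-th root of unity. $H=B(n,w,\gamma)$ is the Hopf algebra generated by $x^{\pm1},g,y$ with relations $xx^{-1}=x^{-1}x=1$, $xg=gx$, $xy=yx$, $yg=\gamma gy$, $y^n=1-x^w=1-g^n$, with $\Delta(x)=x\otimes x$, $\Delta(g)=g\otimes g$, $\Delta(y)=y\otimes g+1\otimes y$, $\varepsilon(x)=\varepsilon(g)=1$, $\varepsilon(y)=0$, $S(x)=x^{-1}$, $S(g)=g^{-1}$, $S(y)=-yg^{-1}$; $G(H)=\{g^jx^k\}$. A (left-left) Yetter-Drinfeld module is a left $H$-module, left $H$-comodule $(V,\cdot,\delta)$ with $\delta(h\cdot v)=h_{(1)}v_{(-1)}S(h_{(3)})\otimes h_{(2)}\cdot v_{(0)}$; simple means no nonzero proper Yetter-Drinfeld submodules. A nonzero $v\in V$ is a standard element of type $(\alpha,\beta,h)$ if $h\in G(H)$, $\alpha,\beta\in\Bbbk^*$, $x\cdot v=\alpha v$, $g\cdot v=\beta v$, $\delta(v)=h\otimes v$. *)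

theory Defs
  imports "HOL-Computational_Algebra.Polynomial"
begin

text \<open>Elements of H are finitely supported functions on the index set
  int x nat x nat; the index (k,j,l) with j < n, l < n stands for the basis
  element x^k g^j y^l.  H (x) H and H (x) H (x) H are represented likewise
  on pairs / triples of indices, and H (x) V by functions bidx => V.\<close>

type_synonym bidx = "int \<times> nat \<times> nat"

definition bvalid :: "nat \<Rightarrow> bidx \<Rightarrow> bool" where
  "bvalid n s \<longleftrightarrow> fst (snd s) < n \<and> snd (snd s) < n"

definition supp :: "('a \<Rightarrow> 'b::zero) \<Rightarrow> 'a set" where
  "supp f = {s. f s \<noteq> 0}"

definition ebas :: "'a \<Rightarrow> 'a \<Rightarrow> 'k::zero_neq_one" where
  "ebas s = (\<lambda>t. if t = s then 1 else 0)"

definition isH :: "nat \<Rightarrow> (bidx \<Rightarrow> 'k::zero) \<Rightarrow> bool" where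
  "isH n f \<longleftrightarrow> finite (supp f) \<and> (\<forall>s\<in>supp f. bvalid n s)"

text \<open>The monomial x^k g^j y^l (k, j integers, l natural) written in the basis,
  using g^n = x^w and y^n = 1 - x^w (x central, x y = y x).\<close>
definition mono :: "nat \<Rightarrow> nat \<Rightarrow> int \<Rightarrow> int \<Rightarrow> nat \<Rightarrow> bidx \<Rightarrow> 'k::comm_ring_1" where
  "mono n w k j l = (\<lambda>t. \<Sum>i\<le>l div n. (-1)^i * of_nat ((l div n) choose i) *
      ebas (k + int w * (j div int n) + int w * int i, nat (j mod int n), l mod n) t)"

text \<open>product of basis elements: x^a g^b y^c * x^k g^j y^l = gamma^(c j) x^(a+k) g^(b+j) y^(c+l)\<close>
definition bprod :: "nat \<Rightarrow> nat \<Rightarrow> 'k::comm_ring_1 \<Rightarrow> bidx \<Rightarrow> bidx \<Rightarrow> bidx \<Rightarrow> 'k" where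
  "bprod n w \<gamma> s s' = (case s of (a, b, c) \<Rightarrow> case s' of (k, j, l) \<Rightarrow>
      (\<lambda>t. \<gamma> ^ (c * j) * mono n w (a + k) (int b + int j) (c + l) t))"

definition hmult :: "nat \<Rightarrow> nat \<Rightarrow> 'k::comm_ring_1 \<Rightarrow> (bidx \<Rightarrow> 'k) \<Rightarrow> (bidx \<Rightarrow> 'k) \<Rightarrow> bidx \<Rightarrow> 'k" where
  "hmult n w \<gamma> f g = (\<lambda>t. \<Sum>s\<in>supp f. \<Sum>s'\<in>supp g. f s * g s' * bprod n w \<gamma> s s' t)"

definition hmult2 :: "nat \<Rightarrow> nat \<Rightarrow> 'k::comm_ring_1 \<Rightarrow> (bidx \<times> bidx \<Rightarrow> 'k) \<Rightarrow> (bidx \<times> bidx \<Rightarrow> 'k)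
    \<Rightarrow> bidx \<times> bidx \<Rightarrow> 'k" where
  "hmult2 n w \<gamma> F G = (\<lambda>(t1, t2). \<Sum>(s1, s2)\<in>supp F. \<Sum>(r1, r2)\<in>supp G.
      F (s1, s2) * G (r1, r2) * bprod n w \<gamma> s1 r1 t1 * bprod n w \<gamma> s2 r2 t2)"

definition hmult3 :: "nat \<Rightarrow> nat \<Rightarrow> 'k::comm_ring_1 \<Rightarrow> (bidx \<times> bidx \<times> bidx \<Rightarrow> 'k)
    \<Rightarrow> (bidx \<times> bidx \<times> bidx \<Rightarrow> 'k) \<Rightarrow> bidx \<times> bidx \<times> bidx \<Rightarrow> 'k" where
  "hmult3 n w \<gamma> F G = (\<lambda>(t1, t2, t3). \<Sum>(s1, s2, s3)\<in>supp F. \<Sum>(r1, r2, r3)\<in>supp G.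
      F (s1, s2, s3) * G (r1, r2, r3) * bprod n w \<gamma> s1 r1 t1 * bprod n w \<gamma> s2 r2 t2
        * bprod n w \<gamma> s3 r3 t3)"

definition tens2 :: "('a \<Rightarrow> 'k::times) \<Rightarrow> ('b \<Rightarrow> 'k) \<Rightarrow> 'a \<times> 'b \<Rightarrow> 'k" where
  "tens2 f g = (\<lambda>(t1, t2). f t1 * g t2)"

definition tens3 :: "('a \<Rightarrow> 'k::times) \<Rightarrow> ('b \<Rightarrow> 'k) \<Rightarrow> ('c \<Rightarrow> 'k) \<Rightarrow> 'a \<times> 'b \<times> 'c \<Rightarrow> 'k" where
  "tens3 f g h = (\<lambda>(t1, t2, t3). f t1 * g t2 * h t3)"

definition Hone :: "nat \<Rightarrow> nat \<Rightarrow> bidx \<Rightarrow> 'k::comm_ring_1" where "Hone n w = mono n w 0 0 0"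
definition Hx :: "nat \<Rightarrow> nat \<Rightarrow> bidx \<Rightarrow> 'k::comm_ring_1" where "Hx n w = mono n w 1 0 0"
definition Hg :: "nat \<Rightarrow> nat \<Rightarrow> bidx \<Rightarrow> 'k::comm_ring_1" where "Hg n w = mono n w 0 1 0"
definition Hy :: "nat \<Rightarrow> nat \<Rightarrow> bidx \<Rightarrow> 'k::comm_ring_1" where "Hy n w = mono n w 0 0 1"

text \<open>Comultiplication on basis elements: Delta is an algebra map, Delta(x^k g^j) =
  x^k g^j (x) x^k g^j and Delta(y) = y (x) g + 1 (x) y.\<close>
definition Delta_b :: "nat \<Rightarrow> nat \<Rightarrow> 'k::comm_ring_1 \<Rightarrow> bidx \<Rightarrow> bidx \<times> bidx \<Rightarrow> 'k" where
  "Delta_b n w \<gamma> s = (case s of (k, j, l) \<Rightarrow>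
     hmult2 n w \<gamma> (tens2 (mono n w k (int j) 0) (mono n w k (int j) 0))
       ((hmult2 n w \<gamma> (\<lambda>t. tens2 (Hy n w) (Hg n w) t + tens2 (Hone n w) (Hy n w) t) ^^ l)
          (tens2 (Hone n w) (Hone n w))))"

text \<open>Iterated comultiplication (Delta (x) id) o Delta on basis elements
  (again an algebra map): Delta2(y) = y (x) g (x) g + 1 (x) y (x) g + 1 (x) 1 (x) y.\<close>
definition Delta2_b :: "nat \<Rightarrow> nat \<Rightarrow> 'k::comm_ring_1 \<Rightarrow> bidx \<Rightarrow> bidx \<times> bidx \<times> bidx \<Rightarrow> 'k" where
  "Delta2_b n w \<gamma> s = (case s of (k, j, l) \<Rightarrow>
     hmult3 n w \<gamma> (tens3 (mono n w k (int j) 0) (mono n w k (int j) 0) (mono n w k (int j) 0))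
       ((hmult3 n w \<gamma> (\<lambda>t. tens3 (Hy n w) (Hg n w) (Hg n w) t + tens3 (Hone n w) (Hy n w) (Hg n w) t
                        + tens3 (Hone n w) (Hone n w) (Hy n w) t) ^^ l)
          (tens3 (Hone n w) (Hone n w) (Hone n w))))"

definition Delta2 :: "nat \<Rightarrow> nat \<Rightarrow> 'k::comm_ring_1 \<Rightarrow> (bidx \<Rightarrow> 'k) \<Rightarrow> bidx \<times> bidx \<times> bidx \<Rightarrow> 'k" where
  "Delta2 n w \<gamma> h = (\<lambda>t. \<Sum>s\<in>supp h. h s * Delta2_b n w \<gamma> s t)"

text \<open>Antipode on basis elements (anti-multiplicative):
  S(x^k g^j y^l) = S(y)^l x^(-k) g^(-j), with S(y) = - y g^(-1).\<close>
definition S_b :: "nat \<Rightarrow> nat \<Rightarrow> 'k::comm_ring_1 \<Rightarrow> bidx \<Rightarrow> bidx \<Rightarrow> 'k" where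
  "S_b n w \<gamma> s = (case s of (k, j, l) \<Rightarrow>
     hmult n w \<gamma> ((hmult n w \<gamma> (\<lambda>t. - hmult n w \<gamma> (Hy n w) (mono n w 0 (-1) 0) t) ^^ l) (Hone n w))
       (mono n w (-k) (- int j) 0))"

definition eps_b :: "bidx \<Rightarrow> 'k::zero_neq_one" where
  "eps_b s = (if snd (snd s) = 0 then 1 else 0)"

text \<open>V is the whole type 'v, a vector space over 'k with scalar multiplication sc.
  The H-action is given on basis elements by rho, and extended linearly to H.
  The coaction is delta, with delta v = sum_s (basis element s) (x) (delta v s).\<close>

definition hact :: "('k::field \<Rightarrow> 'v::ab_group_add \<Rightarrow> 'v) \<Rightarrow> (bidx \<Rightarrow> 'v \<Rightarrow> 'v) \<Rightarrow> (bidx \<Rightarrow> 'k) \<Rightarrow> 'v \<Rightarrow> 'v" where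
  "hact sc \<rho> h v = (\<Sum>s\<in>supp h. sc (h s) (\<rho> s v))"

definition is_Hmodule :: "nat \<Rightarrow> nat \<Rightarrow> 'k::field \<Rightarrow> ('k \<Rightarrow> 'v::ab_group_add \<Rightarrow> 'v) \<Rightarrow> (bidx \<Rightarrow> 'v \<Rightarrow> 'v) \<Rightarrow> bool" where
  "is_Hmodule n w \<gamma> sc \<rho> \<longleftrightarrow>
     (\<forall>s. Vector_Spaces.linear sc sc (\<rho> s)) \<and>
     (\<forall>v. hact sc \<rho> (Hone n w) v = v) \<and>
     (\<forall>f g v. isH n f \<longrightarrow> isH n g \<longrightarrow> hact sc \<rho> (hmult n w \<gamma> f g) v = hact sc \<rho> f (hact sc \<rho> g v))"

definition is_Hcomodule :: "nat \<Rightarrow> nat \<Rightarrow> 'k::field \<Rightarrow> ('k \<Rightarrow> 'v::ab_group_add \<Rightarrow> 'v) \<Rightarrow> ('v \<Rightarrow> bidx \<Rightarrow> 'v) \<Rightarrow> bool" where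
  "is_Hcomodule n w \<gamma> sc \<delta> \<longleftrightarrow>
     (\<forall>s. Vector_Spaces.linear sc sc (\<lambda>v. \<delta> v s)) \<and>
     (\<forall>v. finite (supp (\<delta> v)) \<and> (\<forall>s\<in>supp (\<delta> v). bvalid n s)) \<and>
     (\<forall>v. (\<Sum>s\<in>supp (\<delta> v). sc (eps_b s) (\<delta> v s)) = v) \<and>
     (\<forall>v t1 t2. (\<Sum>s\<in>supp (\<delta> v). sc (Delta_b n w \<gamma> s (t1, t2)) (\<delta> v s)) = \<delta> (\<delta> v t1) t2)"

text \<open>delta(h.v) = h1 v(-1) S(h3) (x) h2.v(0) for all h in H\<close>
definition is_YD :: "nat \<Rightarrow> nat \<Rightarrow> 'k::field \<Rightarrow> ('k \<Rightarrow> 'v::ab_group_add \<Rightarrow> 'v) \<Rightarrow> (bidx \<Rightarrow> 'v \<Rightarrow> 'v)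
    \<Rightarrow> ('v \<Rightarrow> bidx \<Rightarrow> 'v) \<Rightarrow> bool" where
  "is_YD n w \<gamma> sc \<rho> \<delta> \<longleftrightarrow>
     vector_space sc \<and> is_Hmodule n w \<gamma> sc \<rho> \<and> is_Hcomodule n w \<gamma> sc \<delta> \<and>
     (\<forall>h v. isH n h \<longrightarrow>
        \<delta> (hact sc \<rho> h v) =
        (\<lambda>t. \<Sum>(s1, s2, s3)\<in>supp (Delta2 n w \<gamma> h). \<Sum>s\<in>supp (\<delta> v).
            sc (Delta2 n w \<gamma> h (s1, s2, s3) *
                hmult n w \<gamma> (hmult n w \<gamma> (ebas s1) (ebas s)) (S_b n w \<gamma> s3) t)
               (\<rho> s2 (\<delta> v s))))"

definition is_YD_submodule :: "nat \<Rightarrow> ('k::field \<Rightarrow> 'v::ab_group_add \<Rightarrow> 'v) \<Rightarrow> (bidx \<Rightarrow> 'v \<Rightarrow> 'v)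
    \<Rightarrow> ('v \<Rightarrow> bidx \<Rightarrow> 'v) \<Rightarrow> 'v set \<Rightarrow> bool" where
  "is_YD_submodule n sc \<rho> \<delta> W \<longleftrightarrow>
     module.subspace sc W \<and>
     (\<forall>h v. isH n h \<longrightarrow> v \<in> W \<longrightarrow> hact sc \<rho> h v \<in> W) \<and>
     (\<forall>v\<in>W. \<forall>s. \<delta> v s \<in> W)"

definition simple_YD :: "nat \<Rightarrow> nat \<Rightarrow> 'k::field \<Rightarrow> ('k \<Rightarrow> 'v::ab_group_add \<Rightarrow> 'v) \<Rightarrow> (bidx \<Rightarrow> 'v \<Rightarrow> 'v)
    \<Rightarrow> ('v \<Rightarrow> bidx \<Rightarrow> 'v) \<Rightarrow> bool" where
  "simple_YD n w \<gamma> sc \<rho> \<delta> \<longleftrightarrow>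
     is_YD n w \<gamma> sc \<rho> \<delta> \<and> (UNIV :: 'v set) \<noteq> {0} \<and>
     (\<forall>W. is_YD_submodule n sc \<rho> \<delta> W \<longrightarrow> W = {0} \<or> W = UNIV)"

definition standard_type :: "nat \<Rightarrow> nat \<Rightarrow> ('k::field \<Rightarrow> 'v::ab_group_add \<Rightarrow> 'v) \<Rightarrow> (bidx \<Rightarrow> 'v \<Rightarrow> 'v)
    \<Rightarrow> ('v \<Rightarrow> bidx \<Rightarrow> 'v) \<Rightarrow> 'v \<Rightarrow> 'k \<Rightarrow> 'k \<Rightarrow> int \<Rightarrow> int \<Rightarrow> bool" where
  "standard_type n w sc \<rho> \<delta> v \<alpha> \<beta> r i \<longleftrightarrow>
     v \<noteq> 0 \<and> \<alpha> \<noteq> 0 \<and> \<beta> \<noteq> 0 \<and>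
     hact sc \<rho> (Hx n w) v = sc \<alpha> v \<and> hact sc \<rho> (Hg n w) v = sc \<beta> v \<and>
     \<delta> v = (\<lambda>t. sc (mono n w r i 0 t) v)"

text \<open>G(H) = {g^j x^k}: every group-like is x^r g^i for some integers r, i\<close>
definition standard :: "nat \<Rightarrow> nat \<Rightarrow> ('k::field \<Rightarrow> 'v::ab_group_add \<Rightarrow> 'v) \<Rightarrow> (bidx \<Rightarrow> 'v \<Rightarrow> 'v)
    \<Rightarrow> ('v \<Rightarrow> bidx \<Rightarrow> 'v) \<Rightarrow> 'v \<Rightarrow> bool" where
  "standard n w sc \<rho> \<delta> u \<longleftrightarrow> (\<exists>\<alpha> \<beta> r i. standard_type n w sc \<rho> \<delta> u \<alpha> \<beta> r i)"

definition primitive_root :: "nat \<Rightarrow> 'k::comm_ring_1 \<Rightarrow> bool" where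
  "primitive_root n \<gamma> \<longleftrightarrow> \<gamma> ^ n = 1 \<and> (\<forall>m. 0 < m \<and> m < n \<longrightarrow> \<gamma> ^ m \<noteq> 1)"

end

theory Submission
  imports Defs
begin


lemma lin_add: "Vector_Spaces.linear sc sc f \<Longrightarrow> f (x + y) = f x + f y"
  by (simp add: Vector_Spaces.linear_def module_hom_def module_hom_axioms_def)
lemma lin_scale: "Vector_Spaces.linear sc sc f \<Longrightarrow> f (sc c x) = sc c (f x)"
  by (simp add: Vector_Spaces.linear_def module_hom_def module_hom_axioms_def)
lemma lin_hom: "Vector_Spaces.linear sc sc f \<Longrightarrow> module_hom sc sc f"
  by (simp add: Vector_Spaces.linear_def module_hom_def module_hom_axioms_def)

lemma ebas_app: "ebas s t = (if t = s then 1 else 0)"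
  by (simp add: ebas_def)

lemma supp_cebas: "supp (\<lambda>t. (c::'k::comm_ring_1) * ebas a t) = (if c = 0 then {} else {a})"
  by (auto simp: supp_def ebas_def)

lemma supp_ebas: "supp (ebas a :: _ \<Rightarrow> 'k::zero_neq_one) = {a}"
  by (auto simp: supp_def ebas_def)

lemma mono_small:
  assumes "l < n"
  shows "mono n w k j l = ebas (k + int w * (j div int n), nat (j mod int n), l)"
  using assms by (simp add: mono_def fun_eq_iff)

lemma bprod_small:
  assumes "c + l < n"
  shows "bprod n w \<gamma> (a, b, c) (k, j, l) =
    (\<lambda>t. \<gamma> ^ (c * j) * ebas (a + k + int w * ((int b + int j) div int n), nat ((int b + int j) mod int n), c + l) t)"
  using assms by (simp add: bprod_def mono_small)

lemma hmult_cebas: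
  "hmult n w \<gamma> (\<lambda>t. c * ebas a t) (\<lambda>t. d * ebas b t) = (\<lambda>t. c * d * bprod n w \<gamma> a b t)"
  unfolding hmult_def supp_cebas by (auto simp: fun_eq_iff ebas_def)

lemma hmult_cebas_l:
  "hmult n w \<gamma> (\<lambda>t. c * ebas a t) (ebas b) = (\<lambda>t. c * bprod n w \<gamma> a b t)"
  using hmult_cebas[of n w \<gamma> c a 1 b] by simp

lemma hmult_cebas_r:
  "hmult n w \<gamma> (ebas a) (\<lambda>t. d * ebas b t) = (\<lambda>t. d * bprod n w \<gamma> a b t)"
  using hmult_cebas[of n w \<gamma> 1 a d b] by simp

lemma hmult_ebas:
  "hmult n w \<gamma> (ebas a) (ebas b) = bprod n w \<gamma> a b"
  using hmult_cebas[of n w \<gamma> 1 a 1 b] by simp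

lemma bvalid3[simp]: "bvalid n (a, b, c) \<longleftrightarrow> b < n \<and> c < n"
  by (simp add: bvalid_def)

lemma bprod_right_id:
  assumes "bvalid n s"
  shows "bprod n w \<gamma> s (0,0,0) = ebas s"
proof -
  obtain a b c where s: "s = (a,b,c)" by (cases s) auto
  with assms have "b < n" "c < n" by auto
  then show ?thesis unfolding s by (simp add: bprod_small)
qed

lemma bprod_left_id:
  assumes "bvalid n s"
  shows "bprod n w \<gamma> (0,0,0) s = ebas s"
proof -
  obtain a b c where s: "s = (a,b,c)" by (cases s) auto
  with assms have "b < n" "c < n" by auto
  then show ?thesis unfolding s by (simp add: bprod_small)
qed

lemma tens3_ebas: "tens3 (ebas a) (ebas b) (ebas c) = (ebas (a,b,c) :: _ \<Rightarrow> 'k::comm_ring_1)"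
  by (auto simp: tens3_def ebas_def fun_eq_iff)

lemma ebas3: "(ebas s1 t1 * ebas s2 t2 * ebas s3 t3 :: 'k::comm_ring_1) = ebas (s1,s2,s3) (t1,t2,t3)"
  by (auto simp: ebas_def)

lemma sum_ebas_eq:
  assumes "finite (supp F)"
  shows "(\<Sum>x\<in>supp F. F x * ebas x t) = (F t :: 'k::comm_ring_1)"
proof -
  have "(\<Sum>x\<in>supp F. F x * ebas x t) = (\<Sum>x\<in>supp F. if x = t then F x else 0)"
    by (rule sum.cong) (auto simp: ebas_def)
  also have "\<dots> = F t" using assms by (auto simp: supp_def)
  finally show ?thesis .
qed

lemma hmult3_right_id:
  fixes F :: "bidx \<times> bidx \<times> bidx \<Rightarrow> 'k::comm_ring_1"
  assumes fin: "finite (supp F)"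
    and val: "\<And>s1 s2 s3. (s1,s2,s3) \<in> supp F \<Longrightarrow> bvalid n s1 \<and> bvalid n s2 \<and> bvalid n s3"
  shows "hmult3 n w \<gamma> F (ebas ((0,0,0),(0,0,0),(0,0,0))) = F"
proof (rule ext, clarify)
  fix t1 t2 t3
  have "hmult3 n w \<gamma> F (ebas ((0,0,0),(0,0,0),(0,0,0))) (t1,t2,t3)
     = (\<Sum>x\<in>supp F. F x * ebas x (t1,t2,t3))"
    unfolding hmult3_def supp_ebas
    apply simp
    apply (rule sum.cong[OF refl])
    using val by (auto simp: bprod_right_id ebas_def split: if_splits)
  also have "\<dots> = F (t1,t2,t3)" using fin by (rule sum_ebas_eq)
  finally show "hmult3 n w \<gamma> F (ebas ((0,0,0),(0,0,0),(0,0,0))) (t1,t2,t3) = F (t1,t2,t3)" .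
qed

lemma hmult3_left_id:
  fixes F :: "bidx \<times> bidx \<times> bidx \<Rightarrow> 'k::comm_ring_1"
  assumes fin: "finite (supp F)"
    and val: "\<And>s1 s2 s3. (s1,s2,s3) \<in> supp F \<Longrightarrow> bvalid n s1 \<and> bvalid n s2 \<and> bvalid n s3"
  shows "hmult3 n w \<gamma> (ebas ((0,0,0),(0,0,0),(0,0,0))) F = F"
proof (rule ext, clarify)
  fix t1 t2 t3
  have "hmult3 n w \<gamma> (ebas ((0,0,0),(0,0,0),(0,0,0))) F (t1,t2,t3)
     = (\<Sum>x\<in>supp F. F x * ebas x (t1,t2,t3))"
    unfolding hmult3_def supp_ebas
    apply simp
    apply (rule sum.cong[OF refl])
    using val by (auto simp: bprod_left_id ebas_def split: if_splits)
  also have "\<dots> = F (t1,t2,t3)" using fin by (rule sum_ebas_eq)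
  finally show "hmult3 n w \<gamma> (ebas ((0,0,0),(0,0,0),(0,0,0))) F (t1,t2,t3) = F (t1,t2,t3)" .
qed

lemma Hy_eq: "1 < n \<Longrightarrow> Hy n w = ebas (0,0,1)"
  by (simp add: Hy_def mono_small)
lemma Hg_eq: "1 < n \<Longrightarrow> Hg n w = ebas (0,1,0)"
  by (simp add: Hg_def mono_small)
lemma Hone_eq: "0 < n \<Longrightarrow> Hone n w = ebas (0,0,0)"
  by (simp add: Hone_def mono_small)
lemma Hx_eq: "0 < n \<Longrightarrow> Hx n w = ebas (1,0,0)"
  by (simp add: Hx_def mono_small)

definition TT :: "bidx \<times> bidx \<times> bidx \<Rightarrow> 'k::comm_ring_1" where
  "TT = (\<lambda>t. ebas ((0,0,1),(0,1,0),(0,1,0)) t + ebas ((0,0,0),(0,0,1),(0,1,0)) t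
          + ebas ((0,0,0),(0,0,0),(0,0,1)) t)"

lemma supp_TT: "supp (TT :: _ \<Rightarrow> 'k::comm_ring_1) \<subseteq> {((0,0,1),(0,1,0),(0,1,0)), ((0,0,0),(0,0,1),(0,1,0)), ((0,0,0),(0,0,0),(0,0,1))}"
  by (auto simp: supp_def TT_def ebas_def)

lemma fin_TT: "finite (supp (TT :: _ \<Rightarrow> 'k::comm_ring_1))"
  using supp_TT finite_subset by (metis (no_types, lifting) finite.emptyI finite.insertI)

lemma Delta2_b_y:
  assumes "1 < n"
  shows "Delta2_b n w \<gamma> (0,0,1) = (TT :: _ \<Rightarrow> 'k::comm_ring_1)"
proof -
  have val: "bvalid n s1 \<and> bvalid n s2 \<and> bvalid n s3" if "(s1,s2,s3) \<in> supp (TT :: _ \<Rightarrow> 'k)" for s1 s2 s3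
    using supp_TT that assms by auto
  have e: "(\<lambda>t. tens3 (Hy n w) (Hg n w) (Hg n w) t + tens3 (Hone n w) (Hy n w) (Hg n w) t
                        + tens3 (Hone n w) (Hone n w) (Hy n w) t) = (TT :: _ \<Rightarrow> 'k)"
    using assms by (simp add: Hy_eq Hg_eq Hone_eq tens3_ebas TT_def)
  have m: "mono n w 0 0 0 = ebas (0,0,0)" using assms by (simp add: mono_small)
  show ?thesis
    unfolding Delta2_b_def e
    using assms
    by (simp add: m tens3_ebas Hone_eq hmult3_right_id[OF fin_TT val] hmult3_left_id[OF fin_TT val])
qed

lemma supp_ebas_single: "supp (ebas a :: _ \<Rightarrow> 'k::zero_neq_one) = {a}"
  by (rule supp_ebas)

lemma Delta2_Hy:
  assumes "1 < n"
  shows "Delta2 n w \<gamma> (Hy n w) = (TT :: _ \<Rightarrow> 'k::comm_ring_1)"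
  unfolding Delta2_def Hy_eq[OF assms] supp_ebas using Delta2_b_y[OF assms] by (simp add: ebas_def)


lemma m1_div: "0 < n \<Longrightarrow> (-1::int) div int n = -1"
  by (simp add: div_eq_minus1)

lemma m1_mod: "0 < n \<Longrightarrow> nat ((-1::int) mod int n) = n - 1"
  by (simp add: zmod_minus1 nat_diff_distrib)

lemma mono_ginv: "1 < n \<Longrightarrow> mono n w 0 (-1) 0 = ebas (- int w, n - 1, 0)"
  using m1_mod[of n] m1_div[of n] by (simp add: mono_small)

lemma S_b_g:
  assumes "1 < n"
  shows "S_b n w \<gamma> (0,1,0) = (ebas (- int w, n - 1, 0) :: _ \<Rightarrow> 'k::comm_ring_1)"
  using assms by (simp add: S_b_def mono_ginv Hone_eq hmult_ebas bprod_left_id)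

lemma S_b_y:
  assumes "1 < n"
  shows "S_b n w \<gamma> (0,0,1) = (\<lambda>t. (- (\<gamma> ^ (n - 1))) * ebas (- int w, n - 1, 1) t :: 'k::comm_ring_1)"
proof -
  define c where "c = (- (\<gamma> ^ (n - 1)) :: 'k)"
  have n1a: "int (n - 1) div int n = 0"
    using assms by (intro div_pos_pos_trivial) auto
  have n1b: "int (n - 1) mod int n = int (n - 1)"
    using assms by (intro mod_pos_pos_trivial) auto
  have n1: "int (n - 1) div int n = 0" "nat (int (n - 1) mod int n) = n - 1"
    using n1a n1b by (simp del: of_nat_diff)+
  have M: "(\<lambda>t. - hmult n w \<gamma> (Hy n w) (mono n w 0 (-1) 0) t)
      = (\<lambda>t. c * ebas (- int w, n - 1, 1) t)"
    unfolding c_def using assms m1_mod[of n] by (simp add: mono_ginv Hy_eq hmult_ebas bprod_small n1)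
  have "S_b n w \<gamma> (0,0,1) = hmult n w \<gamma> (hmult n w \<gamma> (\<lambda>t. c * ebas (- int w, n - 1, 1) t) (Hone n w))
       (mono n w 0 0 0)"
    unfolding S_b_def using M by simp
  also have "\<dots> = (\<lambda>t. c * ebas (- int w, n - 1, 1) t)"
    using assms by (simp add: mono_small Hone_eq hmult_cebas_l bprod_right_id)
  finally show ?thesis unfolding c_def .
qed



definition Nf :: "nat \<Rightarrow> nat \<Rightarrow> int \<Rightarrow> int \<Rightarrow> int \<times> nat" where
  "Nf n w a b = (a + int w * (b div int n), nat (b mod int n))"

lemma step_idx:
  assumes "0 < n" "j < n"
  shows "(k + - int w + int w * ((int j + int (n - 1)) div int n), nat ((int j + int (n - 1)) mod int n))
         = Nf n w k (int j - 1)"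
proof -
  have e: "int j + int (n - 1) = (int j - 1) + int n" using assms by auto
  have d: "((int j - 1) + int n) div int n = (int j - 1) div int n + 1"
    by (rule div_add_self2) (use assms in simp)
  have m: "((int j - 1) + int n) mod int n = (int j - 1) mod int n"
    by (rule mod_add_self2)
  show ?thesis unfolding e d m Nf_def by (simp add: algebra_simps)
qed

lemma Pterm:
  fixes c' :: "'k::comm_ring_1"
  assumes n: "0 < n" and j: "j < n" and abd: "a + d + b < n"
    and nz: "hmult n w \<gamma> (hmult n w \<gamma> (ebas (0,0,a)) (ebas (k,j,d))) (\<lambda>t. c' * ebas (- int w, n - 1, b) t) t \<noteq> 0"
  shows "(fst t, fst (snd t)) = Nf n w k (int j - 1) \<and> snd (snd t) = a + d + b"
proof -
  have jd: "int j div int n = 0" "nat (int j mod int n) = j" using j by auto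
  have "hmult n w \<gamma> (ebas (0,0,a)) (ebas (k,j,d)) = (\<lambda>t. \<gamma> ^ (a * j) * ebas (k, j, a + d) t)"
    using abd by (simp add: hmult_ebas bprod_small jd)
  then have "hmult n w \<gamma> (hmult n w \<gamma> (ebas (0,0,a)) (ebas (k,j,d))) (\<lambda>t. c' * ebas (- int w, n - 1, b) t)
     = (\<lambda>t. \<gamma> ^ (a * j) * c' * bprod n w \<gamma> (k, j, a + d) (- int w, n - 1, b) t)"
    by (simp add: hmult_cebas)
  also have "\<dots> = (\<lambda>t. \<gamma> ^ (a * j) * c' * (\<gamma> ^ ((a + d) * (n - 1)) *
      ebas (k + - int w + int w * ((int j + int (n - 1)) div int n), nat ((int j + int (n - 1)) mod int n), a + d + b) t))"
    using abd by (simp add: bprod_small)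
  finally have "ebas (k + - int w + int w * ((int j + int (n - 1)) div int n), nat ((int j + int (n - 1)) mod int n), a + d + b) t \<noteq> (0::'k)"
    using nz by (auto simp: ebas_def split: if_splits)
  then have "t = (k + - int w + int w * ((int j + int (n - 1)) div int n), nat ((int j + int (n - 1)) mod int n), a + d + b)"
    by (auto simp: ebas_def split: if_splits)
  then show ?thesis using step_idx[OF n j, of k w] by (metis fst_conv snd_conv)
qed



locale YDC =
  fixes n w :: nat and \<gamma> :: "'k::field" and sc :: "'k \<Rightarrow> 'v::ab_group_add \<Rightarrow> 'v"
    and \<rho> :: "bidx \<Rightarrow> 'v \<Rightarrow> 'v" and \<delta> :: "'v \<Rightarrow> bidx \<Rightarrow> 'v"
  assumes n0: "0 < n" and w0: "0 < w" and prim: "primitive_root n \<gamma>"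
    and YD: "is_YD n w \<gamma> sc \<rho> \<delta>"
begin

lemma vs: "vector_space sc" using YD by (simp add: is_YD_def)

sublocale vector_space sc by (rule vs)

lemma Hmod: "is_Hmodule n w \<gamma> sc \<rho>" using YD by (simp add: is_YD_def)
lemma Hcom: "is_Hcomodule n w \<gamma> sc \<delta>" using YD by (simp add: is_YD_def)
lemma YDcompat: "isH n h \<Longrightarrow> \<delta> (hact sc \<rho> h v) =
        (\<lambda>t. \<Sum>(s1, s2, s3)\<in>supp (Delta2 n w \<gamma> h). \<Sum>s\<in>supp (\<delta> v).
            sc (Delta2 n w \<gamma> h (s1, s2, s3) *
                hmult n w \<gamma> (hmult n w \<gamma> (ebas s1) (ebas s)) (S_b n w \<gamma> s3) t)
               (\<rho> s2 (\<delta> v s)))"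
  using YD by (simp add: is_YD_def)

lemma rho_lin: "Vector_Spaces.linear sc sc (\<rho> s)" using Hmod by (cases s) (simp add: is_Hmodule_def)
lemma delta_lin: "Vector_Spaces.linear sc sc (\<lambda>v. \<delta> v s)" using Hcom by (cases s) (simp add: is_Hcomodule_def)
lemma delta_fin: "finite (supp (\<delta> v))" using Hcom by (simp add: is_Hcomodule_def)
lemma delta_valid: "s \<in> supp (\<delta> v) \<Longrightarrow> bvalid n s" using Hcom by (simp add: is_Hcomodule_def)
lemma counit: "(\<Sum>s\<in>supp (\<delta> v). sc (eps_b s) (\<delta> v s)) = v" using Hcom by (simp add: is_Hcomodule_def)

lemma rho_add: "\<rho> s (x + y) = \<rho> s x + \<rho> s y" using lin_add[OF rho_lin] .
lemma rho_scale: "\<rho> s (sc c x) = sc c (\<rho> s x)" using lin_scale[OF rho_lin] .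
lemma rho_zero: "\<rho> s 0 = 0" using module_hom.zero[OF lin_hom[OF rho_lin]] .
lemma delta_add: "\<delta> (x + y) s = \<delta> x s + \<delta> y s" using lin_add[OF delta_lin] .
lemma delta_scale: "\<delta> (sc c x) s = sc c (\<delta> x s)" using lin_scale[OF delta_lin] .
lemma delta_zero: "\<delta> 0 s = 0" using module_hom.zero[OF lin_hom[OF delta_lin]] .
lemma delta_sum: "\<delta> (sum f A) s = (\<Sum>a\<in>A. \<delta> (f a) s)" using module_hom.sum[OF lin_hom[OF delta_lin]] .

lemma hact_ebas: "hact sc \<rho> (ebas s) x = \<rho> s x"
  unfolding hact_def supp_ebas by (simp add: ebas_def)

lemma hact_cebas: "hact sc \<rho> (\<lambda>t. c * ebas s t) x = sc c (\<rho> s x)"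
  unfolding hact_def supp_cebas by (simp add: ebas_def)

lemma isH_ebas: "bvalid n s \<Longrightarrow> isH n (ebas s)"
  by (simp add: isH_def supp_ebas)

lemma rho0: "\<rho> (0,0,0) x = x"
  using Hmod n0 by (simp add: is_Hmodule_def Hone_eq hact_ebas)

definition shape :: "int \<times> nat \<Rightarrow> nat \<Rightarrow> 'v \<Rightarrow> bool" where
  "shape q l x \<longleftrightarrow> (\<forall>t. \<delta> x t \<noteq> 0 \<longrightarrow> (fst t, fst (snd t)) = q \<and> snd (snd t) \<le> l)"

lemma Ystep:
  assumes n1: "1 < n" and l: "l + 1 < n" and sh: "shape q l x"
  shows "shape (Nf n w (fst q) (int (snd q) - 1)) (l + 1) (\<rho> (0,0,1) x)"
  unfolding shape_def
proof (intro allI impI)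
  fix t
  assume nz: "\<delta> (\<rho> (0,0,1) x) t \<noteq> 0"
  let ?G = "(fst t, fst (snd t)) = Nf n w (fst q) (int (snd q) - 1) \<and> snd (snd t) \<le> l + 1"
  show ?G
  proof (rule ccontr)
    assume nG: "\<not> ?G"
    have Hyx: "hact sc \<rho> (Hy n w) x = \<rho> (0,0,1) x" using n1 by (simp add: Hy_eq hact_ebas)
    have isHy: "isH n (Hy n w :: _ \<Rightarrow> 'k)" using n1 by (simp add: Hy_eq isH_ebas)
    have F: "\<delta> (\<rho> (0,0,1) x) t = (\<Sum>(s1, s2, s3)\<in>supp (TT::_ \<Rightarrow> 'k). \<Sum>s\<in>supp (\<delta> x).
            sc ((TT::_ \<Rightarrow> 'k) (s1, s2, s3) *
                hmult n w \<gamma> (hmult n w \<gamma> (ebas s1) (ebas s)) (S_b n w \<gamma> s3) t)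
               (\<rho> s2 (\<delta> x s)))"
      using YDcompat[OF isHy, of x] n1 by (simp add: Hyx Delta2_Hy)
    have zero: "hmult n w \<gamma> (hmult n w \<gamma> (ebas s1) (ebas s)) (S_b n w \<gamma> s3) t = (0::'k)"
      if s123: "(s1,s2,s3) \<in> supp (TT::_ \<Rightarrow> 'k)" and s: "s \<in> supp (\<delta> x)" for s1 s2 s3 s
    proof (rule ccontr)
      assume hz: "hmult n w \<gamma> (hmult n w \<gamma> (ebas s1) (ebas s)) (S_b n w \<gamma> s3) t \<noteq> (0::'k)"
      obtain d where sd: "s = (fst q, snd q, d)" and dl: "d \<le> l"
        using sh s unfolding shape_def supp_def by (cases s) fastforce
      have jn: "snd q < n" using delta_valid[OF s] sd by simp
      have c3: "(s1,s2,s3) = ((0,0,1),(0,1,0),(0,1,0)) \<or> (s1,s2,s3) = ((0,0,0),(0,0,1),(0,1,0))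
          \<or> (s1,s2,s3) = ((0,0,0),(0,0,0),(0,0,1))" using supp_TT s123 by blast
      have "?G"
      proof -
        from c3 consider (A) "s1 = (0,0,1)" "s3 = (0,1,0)" | (B) "s1 = (0,0,0)" "s3 = (0,1,0)"
          | (C) "s1 = (0,0,0)" "s3 = (0,0,1)" by blast
        then show ?G
        proof cases
          case A
          have "hmult n w \<gamma> (hmult n w \<gamma> (ebas (0,0,1)) (ebas (fst q, snd q, d))) (\<lambda>t. (1::'k) * ebas (- int w, n - 1, 0) t) t \<noteq> 0"
            using hz A sd n1 S_b_g[OF n1, of w \<gamma>] by simp
          from Pterm[OF n0 jn _ this] show ?G using dl l by simp
        next
          case B
          have "hmult n w \<gamma> (hmult n w \<gamma> (ebas (0,0,0)) (ebas (fst q, snd q, d))) (\<lambda>t. (1::'k) * ebas (- int w, n - 1, 0) t) t \<noteq> 0"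
            using hz B sd n1 S_b_g[OF n1, of w \<gamma>] by simp
          from Pterm[OF n0 jn _ this] show ?G using dl l by simp
        next
          case C
          have "hmult n w \<gamma> (hmult n w \<gamma> (ebas (0,0,0)) (ebas (fst q, snd q, d))) (\<lambda>t. (- (\<gamma> ^ (n - 1))) * ebas (- int w, n - 1, 1) t) t \<noteq> 0"
            using hz C sd n1 S_b_y[OF n1, of w \<gamma>] by simp
          from Pterm[OF n0 jn _ this] show ?G using dl l by simp
        qed
      qed
      with nG show False by blast
    qed
    have "\<delta> (\<rho> (0,0,1) x) t = 0"
      unfolding F
      by (rule sum.neutral, clarify, rule sum.neutral) (simp add: zero)
    with nz show False by blast
  qed
qed

end



lemma Nf_step:
  assumes "0 < n"
  shows "Nf n w (fst (Nf n w a b)) (int (snd (Nf n w a b)) - 1) = Nf n w a (b - 1)"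
proof -
  have nn: "0 \<le> b mod int n" using assms by simp
  have e: "b - 1 = (b mod int n - 1) + int n * (b div int n)" by simp
  have d: "(b - 1) div int n = (b mod int n - 1) div int n + b div int n"
    using assms by (subst e, subst div_mult_self2) auto
  have m: "(b - 1) mod int n = (b mod int n - 1) mod int n"
    by (simp add: mod_diff_left_eq)
  show ?thesis unfolding Nf_def using nn d m by (simp add: algebra_simps)
qed

lemma Nf_small: "0 < n \<Longrightarrow> j < n \<Longrightarrow> Nf n w k (int j) = (k, j)"
  by (simp add: Nf_def)

context YDC
begin

lemma gamma_nz: "\<gamma> \<noteq> 0"
  using prim n0 by (auto simp: primitive_root_def zero_power)

lemma rho_comp:
  assumes "bvalid n a" "bvalid n b"
  shows "\<rho> a (\<rho> b x) = hact sc \<rho> (bprod n w \<gamma> a b) x"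
  using Hmod assms unfolding is_Hmodule_def
  by (metis hact_ebas hmult_ebas isH_ebas)

lemma rho_comp_small:
  assumes "jb < n" "lb < n" "ja < n" "la < n" "la + lb < n"
  shows "\<rho> (ka,ja,la) (\<rho> (kb,jb,lb) x) =
    sc (\<gamma> ^ (la * jb)) (\<rho> (ka + kb + int w * ((int ja + int jb) div int n), nat ((int ja + int jb) mod int n), la + lb) x)"
  using assms by (simp add: rho_comp bprod_small hact_cebas)

lemma mono0: "mono n w r i 0 = ebas (fst (Nf n w r i), snd (Nf n w r i), 0)"
  using n0 by (simp add: mono_small Nf_def)

lemma shape_std:
  assumes "standard_type n w sc \<rho> \<delta> u \<alpha> \<beta> r i"
  shows "shape (Nf n w r i) 0 u"
  using assms unfolding standard_type_def shape_def mono0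
  by (auto simp: ebas_def split: if_splits)

lemma Ypow:
  assumes "l + 1 < n"
  shows "\<rho> (0,0,l+1) x = \<rho> (0,0,1) (\<rho> (0,0,l) x)"
  using assms rho_comp_small[of 0 l 0 1 0 0 x] by simp

lemma shape_Ypow:
  assumes "shape (Nf n w r i) 0 u" "l < n"
  shows "shape (Nf n w r (i - int l)) l (\<rho> (0,0,l) u)"
  using assms(2)
proof (induction l)
  case 0
  then show ?case using assms(1) by (simp add: rho0)
next
  case (Suc l)
  then have n1: "1 < n" by simp
  have "shape (Nf n w (fst (Nf n w r (i - int l))) (int (snd (Nf n w r (i - int l))) - 1)) (l + 1)
          (\<rho> (0,0,1) (\<rho> (0,0,l) u))"
    using Suc by (intro Ystep n1) auto
  then show ?case using Suc(2) Ypow[of l u] by (simp add: Nf_step[OF n0] algebra_simps)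
qed

lemma shape_counit:
  assumes "shape q l x"
  shows "\<delta> x (fst q, snd q, 0) = x"
proof -
  have "x = (\<Sum>s\<in>supp (\<delta> x). sc (eps_b s) (\<delta> x s))" by (rule counit[symmetric])
  also have "\<dots> = (\<Sum>s\<in>supp (\<delta> x). if s = (fst q, snd q, 0) then \<delta> x s else 0)"
  proof (rule sum.cong[OF refl])
    fix s assume s: "s \<in> supp (\<delta> x)"
    then have "(fst s, fst (snd s)) = q" using assms by (cases s) (auto simp: shape_def supp_def)
    then show "sc (eps_b s) (\<delta> x s) = (if s = (fst q, snd q, 0) then \<delta> x s else 0)"
      by (cases s) (auto simp: eps_b_def)
  qed
  also have "\<dots> = \<delta> x (fst q, snd q, 0)"
    using delta_fin[of x] by (auto simp: supp_def)
  finally show ?thesis by simp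
qed

lemma shape_other:
  assumes "shape q l x" "q' \<noteq> q"
  shows "\<delta> x (fst q', snd q', 0) = 0"
  using assms by (cases q') (auto simp: shape_def)

end



lemma supp_mono:
  assumes "0 < n"
  shows "supp (mono n w k j l :: _ \<Rightarrow> 'k::comm_ring_1) \<subseteq>
     (\<lambda>i. (k + int w * (j div int n) + int w * int i, nat (j mod int n), l mod n)) ` {..l div n}"
proof
  fix t assume "t \<in> supp (mono n w k j l :: _ \<Rightarrow> 'k)"
  then have "(\<Sum>i\<le>l div n. (-1)^i * of_nat ((l div n) choose i) *
      ebas (k + int w * (j div int n) + int w * int i, nat (j mod int n), l mod n) t) \<noteq> (0::'k)"
    by (simp add: supp_def mono_def)
  then obtain i where "i \<in> {..l div n}" and "(-1)^i * of_nat ((l div n) choose i) *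
      ebas (k + int w * (j div int n) + int w * int i, nat (j mod int n), l mod n) t \<noteq> (0::'k)"
    using sum.not_neutral_contains_not_neutral by blast
  then have "t = (k + int w * (j div int n) + int w * int i, nat (j mod int n), l mod n)"
    by (metis ebas_def mult_zero_right)
  then show "t \<in> (\<lambda>i. (k + int w * (j div int n) + int w * int i, nat (j mod int n), l mod n)) ` {..l div n}"
    using \<open>i \<in> {..l div n}\<close> by blast
qed

lemma mono_valid:
  assumes "0 < n" "mono n w k j l t \<noteq> (0::'k::comm_ring_1)"
  shows "bvalid n t"
proof -
  have "t \<in> supp (mono n w k j l :: _ \<Rightarrow> 'k)" using assms by (simp add: supp_def)
  then have "t \<in> (\<lambda>i. (k + int w * (j div int n) + int w * int i, nat (j mod int n), l mod n)) ` {..l div n}"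
    using supp_mono[OF assms(1)] by blast
  then obtain i where t: "t = (k + int w * (j div int n) + int w * int i, nat (j mod int n), l mod n)" by blast
  have "j mod int n < int n" using assms(1) by simp
  then have "nat (j mod int n) < n" by (subst nat_less_iff) (use assms(1) in auto)
  moreover have "l mod n < n" using assms(1) by simp
  ultimately show ?thesis unfolding t bvalid_def by simp
qed

lemma fin_mono:
  assumes "0 < n"
  shows "finite (supp (mono n w k j l :: _ \<Rightarrow> 'k::comm_ring_1))"
  using supp_mono[OF assms] by (rule finite_subset) simp

lemma bprod_valid:
  assumes "0 < n" "bprod n w \<gamma> a b t \<noteq> (0::'k::comm_ring_1)"
  shows "bvalid n t"
proof -
  obtain a1 a2 a3 b1 b2 b3 where ab: "a = (a1,a2,a3)" "b = (b1,b2,b3)" by (cases a; cases b) auto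
  have "mono n w (a1 + b1) (int a2 + int b2) (a3 + b3) t \<noteq> (0::'k)"
    using assms(2) by (auto simp: ab bprod_def)
  then show ?thesis by (rule mono_valid[OF assms(1)])
qed

lemma fin_bprod:
  assumes "0 < n"
  shows "finite (supp (bprod n w \<gamma> a b :: _ \<Rightarrow> 'k::comm_ring_1))"
proof -
  obtain a1 a2 a3 b1 b2 b3 where ab: "a = (a1,a2,a3)" "b = (b1,b2,b3)" by (cases a; cases b) auto
  have "supp (bprod n w \<gamma> a b :: _ \<Rightarrow> 'k) \<subseteq> supp (mono n w (a1 + b1) (int a2 + int b2) (a3 + b3) :: _ \<Rightarrow> 'k)"
    by (auto simp: ab bprod_def supp_def)
  then show ?thesis using fin_mono[OF assms] by (rule finite_subset)
qed

lemma isH_hmult: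
  assumes "0 < n" "isH n f" "isH n g"
  shows "isH n (hmult n w \<gamma> f g :: _ \<Rightarrow> 'k::comm_ring_1)"
proof -
  have sub: "supp (hmult n w \<gamma> f g) \<subseteq> (\<Union>s\<in>supp f. \<Union>s'\<in>supp g. supp (bprod n w \<gamma> s s' :: _ \<Rightarrow> 'k))"
  proof
    fix t assume "t \<in> supp (hmult n w \<gamma> f g)"
    then have "(\<Sum>s\<in>supp f. \<Sum>s'\<in>supp g. f s * g s' * bprod n w \<gamma> s s' t) \<noteq> 0"
      by (simp add: supp_def hmult_def)
    then obtain s where s: "s \<in> supp f" "(\<Sum>s'\<in>supp g. f s * g s' * bprod n w \<gamma> s s' t) \<noteq> 0"
      using sum.not_neutral_contains_not_neutral by blast
    then obtain s' where s': "s' \<in> supp g" "f s * g s' * bprod n w \<gamma> s s' t \<noteq> 0"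
      using sum.not_neutral_contains_not_neutral by blast
    then have "bprod n w \<gamma> s s' t \<noteq> 0" by (metis mult_zero_right)
    then have "t \<in> supp (bprod n w \<gamma> s s')" by (simp add: supp_def)
    then show "t \<in> (\<Union>s\<in>supp f. \<Union>s'\<in>supp g. supp (bprod n w \<gamma> s s'))"
      using s(1) s'(1) by blast
  qed
  have "finite (\<Union>s\<in>supp f. \<Union>s'\<in>supp g. supp (bprod n w \<gamma> s s' :: _ \<Rightarrow> 'k))"
    using assms(2,3) unfolding isH_def by (intro finite_UN_I fin_bprod[OF assms(1)]) auto
  moreover have "\<forall>t\<in>supp (hmult n w \<gamma> f g). bvalid n t"
  proof
    fix t assume "t \<in> supp (hmult n w \<gamma> f g)"
    then obtain s s' where "t \<in> supp (bprod n w \<gamma> s s' :: _ \<Rightarrow> 'k)" using sub by blast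
    then show "bvalid n t" by (intro bprod_valid[OF assms(1)]) (simp add: supp_def)
  qed
  ultimately show ?thesis using sub finite_subset unfolding isH_def by blast
qed

lemma Delta2_valid:
  assumes "0 < n" "Delta2 n w \<gamma> h (s1, s2, s3) \<noteq> (0::'k::comm_ring_1)"
  shows "bvalid n s2"
proof -
  obtain s where "h s * Delta2_b n w \<gamma> s (s1,s2,s3) \<noteq> 0"
    using assms(2) sum.not_neutral_contains_not_neutral unfolding Delta2_def by blast
  then have D: "Delta2_b n w \<gamma> s (s1,s2,s3) \<noteq> (0::'k)" by auto
  obtain k j l where s: "s = (k,j,l)" by (cases s) auto
  have "\<exists>F G. Delta2_b n w \<gamma> s = (hmult3 n w \<gamma> F G :: _ \<Rightarrow> 'k)"
    unfolding s Delta2_b_def by auto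
  then obtain F G where FG: "Delta2_b n w \<gamma> s = (hmult3 n w \<gamma> F G :: _ \<Rightarrow> 'k)" by blast
  from D have "(\<Sum>(x1, x2, x3)\<in>supp F. \<Sum>(y1, y2, y3)\<in>supp G.
      F (x1, x2, x3) * G (y1, y2, y3) * bprod n w \<gamma> x1 y1 s1 * bprod n w \<gamma> x2 y2 s2
        * bprod n w \<gamma> x3 y3 s3) \<noteq> 0"
    unfolding FG hmult3_def by simp
  then obtain x where "(case x of (x1, x2, x3) \<Rightarrow> \<Sum>(y1, y2, y3)\<in>supp G.
      F (x1, x2, x3) * G (y1, y2, y3) * bprod n w \<gamma> x1 y1 s1 * bprod n w \<gamma> x2 y2 s2
        * bprod n w \<gamma> x3 y3 s3) \<noteq> 0"
    by (meson sum.not_neutral_contains_not_neutral)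
  moreover obtain x1 x2 x3 where xx: "x = (x1,x2,x3)" by (cases x) auto
  ultimately have "(\<Sum>(y1, y2, y3)\<in>supp G.
      F (x1, x2, x3) * G (y1, y2, y3) * bprod n w \<gamma> x1 y1 s1 * bprod n w \<gamma> x2 y2 s2
        * bprod n w \<gamma> x3 y3 s3) \<noteq> 0" by simp
  then obtain y where "(case y of (y1, y2, y3) \<Rightarrow>
      F (x1, x2, x3) * G (y1, y2, y3) * bprod n w \<gamma> x1 y1 s1 * bprod n w \<gamma> x2 y2 s2
        * bprod n w \<gamma> x3 y3 s3) \<noteq> 0"
    by (meson sum.not_neutral_contains_not_neutral)
  moreover obtain y1 y2 y3 where yy: "y = (y1,y2,y3)" by (cases y) auto
  ultimately have "bprod n w \<gamma> x2 y2 s2 \<noteq> (0::'k)" by auto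
  then show ?thesis by (rule bprod_valid[OF assms(1)])
qed



context YDC
begin

lemma rhoX:
  assumes std: "standard_type n w sc \<rho> \<delta> u \<alpha> \<beta> r i"
  shows "\<exists>c. \<rho> (k,0,0) u = sc c u"
proof -
  have Xu: "\<rho> (1,0,0) u = sc \<alpha> u"
    using std n0 by (simp add: standard_type_def Hx_eq hact_ebas)
  have an: "\<alpha> \<noteq> 0" using std by (simp add: standard_type_def)
  have up: "\<rho> (k+1,0,0) x = \<rho> (1,0,0) (\<rho> (k,0,0) x)" for k x
    using rho_comp_small[where ka="1" and ja="0" and la="0" and kb="k" and jb="0" and lb="0" and x="x"] n0 by (simp add: add.commute)
  have dn: "\<rho> (k-1,0,0) (\<rho> (1,0,0) x) = \<rho> (k,0,0) x" for k x
    using rho_comp_small[where ka="k-1" and ja="0" and la="0" and kb="1" and jb="0" and lb="0" and x="x"] n0 by simp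
  show ?thesis
  proof (induction k rule: int_induct[where k=0])
    case base
    then show ?case using rho0 by (metis scale_one)
  next
    case (step1 k)
    then obtain c where "\<rho> (k,0,0) u = sc c u" by blast
    then show ?case using up Xu by (metis rho_scale scale_scale)
  next
    case (step2 k)
    then obtain c where c: "\<rho> (k,0,0) u = sc c u" by blast
    have "sc \<alpha> (\<rho> (k-1,0,0) u) = sc c u" using dn[of k u] Xu c by (simp add: rho_scale)
    then have "sc (inverse \<alpha>) (sc \<alpha> (\<rho> (k-1,0,0) u)) = sc (inverse \<alpha>) (sc c u)" by simp
    then have "\<rho> (k-1,0,0) u = sc (inverse \<alpha> * c) u" using an by simp
    then show ?case by blast
  qed
qed

lemma rhoG:
  assumes std: "standard_type n w sc \<rho> \<delta> u \<alpha> \<beta> r i" and j: "j < n"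
  shows "\<exists>c. \<rho> (0,j,0) u = sc c u"
  using j
proof (induction j)
  case 0
  then show ?case using rho0 by (metis scale_one)
next
  case (Suc j)
  then have n1: "1 < n" by simp
  have Gu: "\<rho> (0,1,0) u = sc \<beta> u"
    using std n1 by (simp add: standard_type_def Hg_eq hact_ebas)
  have "\<rho> (0,1,0) (\<rho> (0,j,0) u) = \<rho> (0, Suc j, 0) u"
    using rho_comp_small[where ka="0" and ja="1" and la="0" and kb="0" and jb="j" and lb="0" and x="u"] Suc.prems by (simp add: nat_add_distrib add.commute)
  moreover obtain c where "\<rho> (0,j,0) u = sc c u" using Suc by auto
  ultimately show ?case using Gu by (metis rho_scale scale_scale)
qed

lemma rhoKJL:
  assumes std: "standard_type n w sc \<rho> \<delta> u \<alpha> \<beta> r i" and s: "bvalid n s"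
  shows "\<exists>c. \<rho> s u = sc c (\<rho> (0,0,snd (snd s)) u)"
proof -
  obtain k j l where s': "s = (k,j,l)" by (cases s) auto
  have j: "j < n" and l: "l < n" using s s' by auto
  obtain c1 where c1: "\<rho> (k,0,0) u = sc c1 u" using rhoX[OF std] by blast
  obtain c2 where c2: "\<rho> (0,j,0) u = sc c2 u" using rhoG[OF std j] by blast
  have "\<rho> (k,0,0) (\<rho> (0,j,0) u) = \<rho> (k,j,0) u"
    using rho_comp_small[where ka="k" and ja="0" and la="0" and kb="0" and jb="j" and lb="0" and x="u"] j n0 by simp
  then have kj: "\<rho> (k,j,0) u = sc (c2 * c1) u" using c1 c2 by (simp add: rho_scale)
  have "\<rho> (0,0,l) (\<rho> (k,j,0) u) = sc (\<gamma> ^ (l * j)) (\<rho> (k,j,l) u)"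
    using rho_comp_small[where ka="0" and ja="0" and la="l" and kb="k" and jb="j" and lb="0" and x="u"] j l n0 by simp
  then have "sc (c2 * c1) (\<rho> (0,0,l) u) = sc (\<gamma> ^ (l * j)) (\<rho> (k,j,l) u)"
    using kj by (simp add: rho_scale)
  then have "sc (inverse (\<gamma> ^ (l * j))) (sc (c2 * c1) (\<rho> (0,0,l) u))
      = sc (inverse (\<gamma> ^ (l * j))) (sc (\<gamma> ^ (l * j)) (\<rho> (k,j,l) u))" by simp
  then have "\<rho> (k,j,l) u = sc (inverse (\<gamma> ^ (l * j)) * (c2 * c1)) (\<rho> (0,0,l) u)"
    using gamma_nz by simp
  then show ?thesis unfolding s' by auto
qed

end



lemma Nf_eq_iff:
  assumes "0 < n"
  shows "Nf n w a b = Nf n w a' b' \<longleftrightarrow> a + int w * (b div int n) = a' + int w * (b' div int n) \<and> b mod int n = b' mod int n"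
proof -
  have p: "0 \<le> b mod int n" "0 \<le> b' mod int n" using assms by simp_all
  show ?thesis unfolding Nf_def using p by (simp add: eq_nat_nat_iff)
qed

lemma Nf_inj:
  assumes "0 < n" "l < n" "l' < n" "Nf n w a (b - int l) = Nf n w a (b - int l')"
  shows "l = l'"
proof -
  have "(b - int l) mod int n = (b - int l') mod int n"
    using assms(4) Nf_eq_iff[OF assms(1)] by blast
  then have d: "int n dvd ((b - int l) - (b - int l'))"
    by (simp only: mod_eq_dvd_iff)
  show ?thesis
  proof (rule ccontr)
    assume "l \<noteq> l'"
    then have ne: "(b - int l) - (b - int l') \<noteq> 0" by simp
    have "\<bar>int n\<bar> \<le> \<bar>(b - int l) - (b - int l')\<bar>" by (rule dvd_imp_le_int[OF ne d])
    then have "int n \<le> \<bar>int l' - int l\<bar>" by simp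
    with assms(2,3) show False by linarith
  qed
qed

lemma div_split_m:
  assumes "0 < n"
  shows "(b - m) div int n = (b mod int n - m) div int n + b div int n"
proof -
  have e: "b - m = (b mod int n - m) + b div int n * int n" by (simp add: algebra_simps)
  have "((b mod int n - m) + b div int n * int n) div int n = (b mod int n - m) div int n + b div int n"
    using assms by simp
  then show ?thesis by (simp only: e[symmetric])
qed

lemma Nf_shift:
  assumes n: "0 < n" and eq: "Nf n w a b = Nf n w a' b'"
  shows "Nf n w a (b - m) = Nf n w a' (b' - m)"
proof -
  have d: "a + int w * (b div int n) = a' + int w * (b' div int n)" and m: "b mod int n = b' mod int n"
    using eq Nf_eq_iff[OF n] by blast+
  have m2: "(b - m) mod int n = (b' - m) mod int n"
    using m by (metis mod_diff_left_eq)
  have "a + int w * ((b - m) div int n) = a' + int w * ((b' - m) div int n)"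
    unfolding div_split_m[OF n, of b m] div_split_m[OF n, of b' m] m
    using d by (simp add: algebra_simps)
  then show ?thesis using m2 Nf_eq_iff[OF n] by blast
qed

lemma Nf_ne:
  assumes n: "0 < n" and w: "0 < w" and m: "0 < m"
  shows "Nf n w a b \<noteq> Nf n w a (b - m)"
proof
  assume eq: "Nf n w a b = Nf n w a (b - m)"
  then have d: "a + int w * (b div int n) = a + int w * ((b - m) div int n)" and mm: "b mod int n = (b - m) mod int n"
    using Nf_eq_iff[OF n] by blast+
  then have dd: "b div int n = (b - m) div int n" using w by simp
  have "b = b div int n * int n + b mod int n" by simp
  also have "\<dots> = (b - m) div int n * int n + (b - m) mod int n" using dd mm by simp
  also have "\<dots> = b - m" by simp
  finally show False using m by simp
qed

context YDC
begin

lemma hact_superset: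
  assumes "finite A" "supp f \<subseteq> A"
  shows "hact sc \<rho> f x = (\<Sum>s\<in>A. sc (f s) (\<rho> s x))"
  unfolding hact_def
  by (rule sum.mono_neutral_left) (use assms in \<open>auto simp: supp_def\<close>)

lemma hact_add:
  assumes "isH n f" "isH n g"
  shows "hact sc \<rho> (\<lambda>t. f t + g t) x = hact sc \<rho> f x + hact sc \<rho> g x"
proof -
  let ?A = "supp f \<union> supp g"
  have fin: "finite ?A" using assms by (simp add: isH_def)
  have "hact sc \<rho> (\<lambda>t. f t + g t) x = (\<Sum>s\<in>?A. sc (f s + g s) (\<rho> s x))"
    by (rule hact_superset[OF fin]) (auto simp: supp_def)
  also have "\<dots> = (\<Sum>s\<in>?A. sc (f s) (\<rho> s x)) + (\<Sum>s\<in>?A. sc (g s) (\<rho> s x))"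
    by (simp add: scale_left_distrib sum.distrib)
  also have "\<dots> = hact sc \<rho> f x + hact sc \<rho> g x"
    by (simp add: hact_superset[OF fin])
  finally show ?thesis .
qed

lemma hact_smult:
  assumes "isH n f"
  shows "hact sc \<rho> (\<lambda>t. c * f t) x = sc c (hact sc \<rho> f x)"
proof -
  have fin: "finite (supp f)" using assms by (simp add: isH_def)
  have "hact sc \<rho> (\<lambda>t. c * f t) x = (\<Sum>s\<in>supp f. sc (c * f s) (\<rho> s x))"
    by (rule hact_superset[OF fin]) (auto simp: supp_def)
  also have "\<dots> = sc c (hact sc \<rho> f x)"
    by (simp add: hact_def scale_sum_right)
  finally show ?thesis .
qed

lemma isH_add:
  fixes f g :: "bidx \<Rightarrow> 'k"
  assumes "isH n f" "isH n g" shows "isH n (\<lambda>t. f t + g t)"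
proof -
  have sub: "supp (\<lambda>t. f t + g t) \<subseteq> supp f \<union> supp g" by (auto simp: supp_def)
  show ?thesis using assms sub unfolding isH_def
    by (metis (no_types, lifting) Un_iff finite_UnI finite_subset subsetD)
qed

lemma isH_smult:
  fixes f :: "bidx \<Rightarrow> 'k"
  assumes "isH n f" shows "isH n (\<lambda>t. c * f t)"
proof -
  have sub: "supp (\<lambda>t. c * f t) \<subseteq> supp f" by (auto simp: supp_def)
  show ?thesis using assms sub unfolding isH_def
    by (metis (no_types, lifting) finite_subset subsetD)
qed

definition WW :: "'v \<Rightarrow> 'v set" where
  "WW u = {hact sc \<rho> h u | h :: bidx \<Rightarrow> 'k. isH n h}"

lemma WW_rho: "bvalid n s \<Longrightarrow> \<rho> s u \<in> WW u"
proof -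
  assume "bvalid n s"
  then have "isH n (ebas s :: _ \<Rightarrow> 'k)" by (rule isH_ebas)
  moreover have "\<rho> s u = hact sc \<rho> (ebas s :: _ \<Rightarrow> 'k) u" by (simp add: hact_ebas)
  ultimately show ?thesis unfolding WW_def by blast
qed

lemma WW_sub: "subspace (WW u)"
proof (rule subspaceI)
  show "0 \<in> WW u" unfolding WW_def
    by (rule CollectI, rule exI[of _ "\<lambda>t. 0"]) (simp add: hact_def supp_def isH_def)
next
  fix x y assume "x \<in> WW u" "y \<in> WW u"
  then obtain f g :: "bidx \<Rightarrow> 'k" where fg: "isH n f" "isH n g" "x = hact sc \<rho> f u" "y = hact sc \<rho> g u"
    unfolding WW_def by blast
  have "x + y = hact sc \<rho> (\<lambda>t. f t + g t) u" using fg hact_add by simp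
  moreover have "isH n (\<lambda>t. f t + g t)" using fg isH_add by blast
  ultimately show "x + y \<in> WW u" unfolding WW_def by blast
next
  fix c x assume "x \<in> WW u"
  then obtain f :: "bidx \<Rightarrow> 'k" where f: "isH n f" "x = hact sc \<rho> f u"
    unfolding WW_def by blast
  have "sc c x = hact sc \<rho> (\<lambda>t. c * f t) u" using f hact_smult by simp
  moreover have "isH n (\<lambda>t. c * f t)" using f isH_smult by blast
  ultimately show "sc c x \<in> WW u" unfolding WW_def by blast
qed

lemma WW_submod:
  assumes std: "standard_type n w sc \<rho> \<delta> u \<alpha> \<beta> r i"
  shows "is_YD_submodule n sc \<rho> \<delta> (WW u)"
  unfolding is_YD_submodule_def
proof (intro conjI allI impI ballI)
  show "subspace (WW u)" by (rule WW_sub)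
next
  fix h :: "bidx \<Rightarrow> 'k" and x assume h: "isH n h" and x: "x \<in> WW u"
  then obtain f :: "bidx \<Rightarrow> 'k" where f: "isH n f" "x = hact sc \<rho> f u" unfolding WW_def by blast
  have "hact sc \<rho> h x = hact sc \<rho> (hmult n w \<gamma> h f) u"
    using Hmod h f unfolding is_Hmodule_def by simp
  moreover have "isH n (hmult n w \<gamma> h f)" using isH_hmult[OF n0 h f(1)] .
  ultimately show "hact sc \<rho> h x \<in> WW u" unfolding WW_def by blast
next
  fix x s assume x: "x \<in> WW u"
  then obtain f :: "bidx \<Rightarrow> 'k" where f: "isH n f" "x = hact sc \<rho> f u" unfolding WW_def by blast
  have du: "\<delta> u s' = sc (mono n w r i 0 s') u" for s'
    using std by (simp add: standard_type_def)
  have "\<delta> x s = (\<Sum>(s1, s2, s3)\<in>supp (Delta2 n w \<gamma> f). \<Sum>s'\<in>supp (\<delta> u).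
            sc (Delta2 n w \<gamma> f (s1, s2, s3) *
                hmult n w \<gamma> (hmult n w \<gamma> (ebas s1) (ebas s')) (S_b n w \<gamma> s3) s)
               (\<rho> s2 (\<delta> u s')))"
    using YDcompat[OF f(1), of u] f(2) by simp
  also have "\<dots> \<in> WW u"
  proof (rule subspace_sum[OF WW_sub])
    fix y assume y: "y \<in> supp (Delta2 n w \<gamma> f)"
    obtain s1 s2 s3 where yy: "y = (s1,s2,s3)" by (cases y) auto
    have "Delta2 n w \<gamma> f (s1, s2, s3) \<noteq> 0" using y yy by (simp add: supp_def)
    then have v2: "bvalid n s2" by (rule Delta2_valid[OF n0])
    show "(case y of (s1, s2, s3) \<Rightarrow> \<Sum>s'\<in>supp (\<delta> u).
            sc (Delta2 n w \<gamma> f (s1, s2, s3) *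
                hmult n w \<gamma> (hmult n w \<gamma> (ebas s1) (ebas s')) (S_b n w \<gamma> s3) s)
               (\<rho> s2 (\<delta> u s'))) \<in> WW u"
      unfolding yy prod.case
      by (rule subspace_sum[OF WW_sub], unfold du rho_scale)
         (intro subspace_scale[OF WW_sub] WW_rho v2)
  qed
  finally show "\<delta> x s \<in> WW u" .
qed

lemma WW_univ:
  assumes simple: "\<forall>W. is_YD_submodule n sc \<rho> \<delta> W \<longrightarrow> W = {0} \<or> W = UNIV"
    and std: "standard_type n w sc \<rho> \<delta> u \<alpha> \<beta> r i"
  shows "WW u = UNIV"
proof -
  have "u \<in> WW u" using WW_rho[of "(0,0,0)" u] n0 by (simp add: rho0)
  moreover have "u \<noteq> 0" using std by (simp add: standard_type_def)
  ultimately show ?thesis using simple WW_submod[OF std] by blast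
qed

end



context YDC
begin

lemma extract_std:
  assumes smp: "\<forall>W. is_YD_submodule n sc \<rho> \<delta> W \<longrightarrow> W = {0} \<or> W = UNIV"
    and su: "standard_type n w sc \<rho> \<delta> u \<alpha>' \<beta>' r' i'"
    and sv: "standard_type n w sc \<rho> \<delta> v \<alpha> \<beta> r i"
  shows "\<exists>l0<n. \<exists>c. v = sc c (\<rho> (0,0,l0) u) \<and> Nf n w r i = Nf n w r' (i' - int l0)"
proof -
  have "v \<in> WW u" using WW_univ[OF smp su] by simp
  then obtain h :: "bidx \<Rightarrow> 'k" where h: "isH n h" and vh: "v = hact sc \<rho> h u"
    unfolding WW_def by blast
  define L where "L s = snd (snd s)" for s :: bidx
  define z where "z l = \<rho> (0,0,l) u" for l
  define cf where "cf s = (SOME c. \<rho> s u = sc c (z (L s)))" for s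
  have valid: "bvalid n s" if "s \<in> supp h" for s using h that by (simp add: isH_def)
  have Ln: "L s < n" if "s \<in> supp h" for s using valid[OF that] by (cases s) (simp add: L_def)
  have rs: "\<rho> s u = sc (cf s) (z (L s))" if "s \<in> supp h" for s
  proof -
    have "\<exists>c. \<rho> s u = sc c (z (L s))" using rhoKJL[OF su valid[OF that]] by (simp add: z_def L_def)
    then show ?thesis unfolding cf_def by (rule someI_ex)
  qed
  let ?q = "Nf n w r i"
  let ?P = "\<lambda>s. ?q = Nf n w r' (i' - int (L s))"
  have v_eq: "v = (\<Sum>s\<in>supp h. sc (h s * cf s) (z (L s)))"
    unfolding vh hact_def by (rule sum.cong[OF refl]) (simp add: rs)
  have dv: "\<delta> v (fst ?q, snd ?q, 0) = v"
    by (rule shape_counit[OF shape_std[OF sv]])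
  have shz: "shape (Nf n w r' (i' - int (L s))) (L s) (z (L s))" if "s \<in> supp h" for s
    unfolding z_def by (rule shape_Ypow[OF shape_std[OF su] Ln[OF that]])
  have dz: "\<delta> (z (L s)) (fst ?q, snd ?q, 0) = (if ?P s then z (L s) else 0)" if "s \<in> supp h" for s
  proof (cases "?P s")
    case True
    then show ?thesis using shape_counit[OF shz[OF that]] by simp
  next
    case False
    then show ?thesis using shape_other[OF shz[OF that], of ?q] by auto
  qed
  have v2: "v = (\<Sum>s\<in>supp h. sc (h s * cf s) (if ?P s then z (L s) else 0))"
  proof -
    have "v = \<delta> v (fst ?q, snd ?q, 0)" using dv by simp
    also have "\<dots> = (\<Sum>s\<in>supp h. sc (h s * cf s) (\<delta> (z (L s)) (fst ?q, snd ?q, 0)))"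
      by (subst v_eq) (simp add: delta_sum delta_scale)
    also have "\<dots> = (\<Sum>s\<in>supp h. sc (h s * cf s) (if ?P s then z (L s) else 0))"
      by (rule sum.cong[OF refl]) (simp add: dz)
    finally show ?thesis .
  qed
  show ?thesis
  proof (cases "\<exists>s\<in>supp h. ?P s")
    case True
    then obtain s0 where s0: "s0 \<in> supp h" "?P s0" by blast
    have same: "L s = L s0" if "s \<in> supp h" "?P s" for s
      using Nf_inj[OF n0 Ln[OF that(1)] Ln[OF s0(1)], of w r' i'] that(2) s0(2) by simp
    have "v = (\<Sum>s\<in>supp h. sc (if ?P s then h s * cf s else 0) (z (L s0)))"
    proof (subst v2, rule sum.cong[OF refl])
      fix s assume s: "s \<in> supp h"
      show "sc (h s * cf s) (if ?P s then z (L s) else 0) = sc (if ?P s then h s * cf s else 0) (z (L s0))"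
      proof (cases "?P s")
        case True
        then show ?thesis using same[OF s True] by simp
      next
        case False
        then show ?thesis by simp
      qed
    qed
    also have "\<dots> = sc (\<Sum>s\<in>supp h. if ?P s then h s * cf s else 0) (z (L s0))"
      by (simp add: scale_sum_left)
    finally have "v = sc (\<Sum>s\<in>supp h. if ?P s then h s * cf s else 0) (\<rho> (0,0,L s0) u)"
      by (simp add: z_def)
    then show ?thesis using Ln[OF s0(1)] s0(2) by blast
  next
    case False
    then have "v = 0" unfolding v2 by simp
    with sv show ?thesis by (simp add: standard_type_def)
  qed
qed

end

theorem corollary3p20:
  fixes n w p :: nat and \<gamma> :: "'k::{alg_closed_field, field_char_0}"
    and sc :: "'k \<Rightarrow> 'v::ab_group_add \<Rightarrow> 'v"
    and \<rho> :: "bidx \<Rightarrow> 'v \<Rightarrow> 'v" and \<delta> :: "'v \<Rightarrow> bidx \<Rightarrow> 'v"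
    and v u :: 'v and \<alpha> \<beta> :: 'k and r i :: int
  assumes "0 < n" and "0 < w" and "primitive_root n \<gamma>"
    and "simple_YD n w \<gamma> sc \<rho> \<delta>"
    and "vector_space.dim sc (UNIV :: 'v set) = p + 1"
    and "standard_type n w sc \<rho> \<delta> v \<alpha> \<beta> r i"
    and "standard n w sc \<rho> \<delta> u"
  shows "\<exists>c. c \<noteq> 0 \<and> u = sc c v"
proof -
  have YD: "is_YD n w \<gamma> sc \<rho> \<delta>" using assms(4) by (simp add: simple_YD_def)
  interpret Y: YDC n w \<gamma> sc \<rho> \<delta> using assms(1,2,3) YD by unfold_locales
  have smp: "\<forall>W. is_YD_submodule n sc \<rho> \<delta> W \<longrightarrow> W = {0} \<or> W = UNIV"
    using assms(4) by (simp add: simple_YD_def)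
  obtain \<alpha>' \<beta>' r' i' where su: "standard_type n w sc \<rho> \<delta> u \<alpha>' \<beta>' r' i'"
    using assms(7) by (auto simp: standard_def)
  obtain l0 c where l0: "l0 < n" and vc: "v = sc c (\<rho> (0,0,l0) u)" and q0: "Nf n w r i = Nf n w r' (i' - int l0)"
    using Y.extract_std[OF smp su assms(6)] by blast
  obtain l1 c' where l1: "l1 < n" and uc: "u = sc c' (\<rho> (0,0,l1) v)" and q1: "Nf n w r' i' = Nf n w r (i - int l1)"
    using Y.extract_std[OF smp assms(6) su] by blast
  show ?thesis
  proof (cases "l0 = 0")
    case True
    then have vc': "v = sc c u" using vc by (simp add: Y.rho0)
    have "v \<noteq> 0" using assms(6) by (simp add: standard_type_def)
    then have cnz: "c \<noteq> 0" using vc' by auto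
    have "sc (inverse c) v = u" using vc' cnz by simp
    then show ?thesis using cnz by (intro exI[of _ "inverse c"]) auto
  next
    case False
    have "Nf n w r (i - int l1) = Nf n w r' (i' - int l0 - int l1)"
      using Nf_shift[OF assms(1) q0] by simp
    then have "Nf n w r' i' = Nf n w r' (i' - int (l0 + l1))" using q1 by (simp add: algebra_simps)
    moreover have "Nf n w r' i' \<noteq> Nf n w r' (i' - int (l0 + l1))"
      using Nf_ne[OF assms(1,2)] False by simp
    ultimately show ?thesis by blast
  qed
qed


end
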